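(* Let $(R,\mathfrak m,k)$ be a commutative noetherian local ring and $I$ an ideal with $\nu(I)=2$ and $\operatorname{grade}_R(I)=0$. Let $f_1,f_2$ be a minimal generating set of $I$, $S=R/I$, $E$ the Koszul complex on $f_1,f_2$ with $E_1$ having basis $v_1,v_2$, $\partial(v_i)=f_i$. Then the following are equivalent: (1) $I$ is a q.c.i. ideal; (2) $\mathrm H_1(E)\cong S^2$, $(0:_RI)=\Delta R$ and $(0:_R\Delta)=I$, where $\Delta=a_{11}a_{22}-a_{12}a_{21}$ for cycles $z_j=a_{1j}v_1+a_{2j}v_2$ ($j=1,2$, $a_{ij}\in R$) whose homology classes minimally generate $\mathrm H_1(E)$; (3) there exist elements $a,b,c,d\in\mathfrak m$ such that the sequence $$R^4\xrightarrow{d_3}R^3\xrightarrow{d_2}R^2\xrightarrow{d_1}R\xrightarrow{d_0}R\xrightarrow{d_1^{\mathrm T}}R^2$$ is exact, where $d_0$ is multiplication by $ad-bc$, $d_1=\begin{bmatrix} f_1& f_2\end{bmatrix}$, $$d_2=\begin{bmatrix}-f_2&a&b\\ f_1&c&d\end{bmatrix},\qquad d_3=\begin{bmatrix}-c&-d&a&b\\ f_1&0&f_2&0\\ 0&f_1&0&f_2\end{bmatrix}.$$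
   Context: $\nu(M)$ denotes minimal number of generators. An ideal $I$ of a local ring $R$ with $\nu(I)=n$, minimal generating set $f_1,\dots,f_n$, Koszul complex $E$ on $f_1,\dots,f_n$ and $S=R/I$ is a quasi-complete intersection (q.c.i.) ideal if $\mathrm H_1(E)$ is a free $S$-module and the canonical homomorphism of graded $S$-algebras $\bigwedge^S_* \mathrm H_1(E)\to \mathrm H_*(E)$ is bijective. $\operatorname{grade}_R(I)$ is the maximal length of an $R$-regular sequence in $I$. *)

theory Defs
  imports Main
begin

definition is_ideal :: "'a::comm_ring_1 set \<Rightarrow> bool" where
  "is_ideal J \<longleftrightarrow> 0 \<in> J \<and> (\<forall>x\<in>J. \<forall>y\<in>J. x + y \<in> J) \<and> (\<forall>r. \<forall>x\<in>J. r * x \<in> J)"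

definition ideal_gen :: "'a::comm_ring_1 set \<Rightarrow> 'a set" where
  "ideal_gen F = {x. \<exists>G c. finite G \<and> G \<subseteq> F \<and> x = (\<Sum>g\<in>G. c g * g)}"

definition noetherian_ring :: "'a::comm_ring_1 itself \<Rightarrow> bool" where
  "noetherian_ring _ \<longleftrightarrow>
     (\<forall>J::'a set. is_ideal J \<longrightarrow> (\<exists>F. finite F \<and> J = ideal_gen F))"

(* local ring: nonzero, and the non-units form an ideal (the maximal ideal) *)
definition local_ring :: "'a::comm_ring_1 itself \<Rightarrow> bool" where
  "local_ring _ \<longleftrightarrow> (0::'a) \<noteq> 1 \<and>
     (\<forall>x y::'a. \<not> x dvd 1 \<longrightarrow> \<not> y dvd 1 \<longrightarrow> \<not> ((x + y) dvd 1))"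

definition max_ideal :: "'a::comm_ring_1 set" where
  "max_ideal = {x. \<not> x dvd 1}"

definition ann :: "'a::comm_ring_1 set \<Rightarrow> 'a set" where
  "ann J = {x. \<forall>y\<in>J. x * y = 0}"

definition I2 :: "'a::comm_ring_1 \<Rightarrow> 'a \<Rightarrow> 'a set" where
  "I2 f1 f2 = {x * f1 + y * f2 | x y. True}"

(* Koszul complex E on f1,f2:  0 -> R -> R^2 -> R -> 0,
   E_1 = R v1 + R v2 (pairs (x,y) = x v1 + y v2), E_2 = R (v1 \<and> v2),
   d(v_i) = f_i,  d(v1 \<and> v2) = f1 v2 - f2 v1. *)
definition kz_cycle :: "'a::comm_ring_1 \<Rightarrow> 'a \<Rightarrow> 'a \<times> 'a \<Rightarrow> bool" where
  "kz_cycle f1 f2 p \<longleftrightarrow> fst p * f1 + snd p * f2 = 0"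

definition kz_bdry :: "'a::comm_ring_1 \<Rightarrow> 'a \<Rightarrow> 'a \<Rightarrow> 'a \<Rightarrow> bool" where
  "kz_bdry f1 f2 x y \<longleftrightarrow> (\<exists>r. x = - (r * f2) \<and> y = r * f1)"

(* 2-cycles of E (= H_2(E), as there are no 3-chains) *)
definition kz_H2 :: "'a::comm_ring_1 \<Rightarrow> 'a \<Rightarrow> 'a set" where
  "kz_H2 f1 f2 = {w. w * f1 = 0 \<and> w * f2 = 0}"

(* product z \<and> z' of two 1-chains, as coefficient of v1 \<and> v2 *)
definition kz_wedge :: "'a::comm_ring_1 \<times> 'a \<Rightarrow> 'a \<times> 'a \<Rightarrow> 'a" where
  "kz_wedge p q = fst p * snd q - snd p * fst q"

definition lincomb :: "(nat \<Rightarrow> 'a::comm_ring_1) \<Rightarrow> (nat \<Rightarrow> 'a \<times> 'a) \<Rightarrow> nat \<Rightarrow> 'a \<times> 'a" where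
  "lincomb c z r = ((\<Sum>i<r. c i * fst (z i)), (\<Sum>i<r. c i * snd (z i)))"

definition H1_generates :: "'a::comm_ring_1 \<Rightarrow> 'a \<Rightarrow> (nat \<Rightarrow> 'a \<times> 'a) \<Rightarrow> nat \<Rightarrow> bool" where
  "H1_generates f1 f2 z r \<longleftrightarrow> (\<forall>i<r. kz_cycle f1 f2 (z i)) \<and>
     (\<forall>p. kz_cycle f1 f2 p \<longrightarrow>
        (\<exists>c. kz_bdry f1 f2 (fst p - fst (lincomb c z r)) (snd p - snd (lincomb c z r))))"

(* the classes are linearly independent over S = R/I *)
definition H1_indep :: "'a::comm_ring_1 \<Rightarrow> 'a \<Rightarrow> (nat \<Rightarrow> 'a \<times> 'a) \<Rightarrow> nat \<Rightarrow> bool" where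
  "H1_indep f1 f2 z r \<longleftrightarrow>
     (\<forall>c. kz_bdry f1 f2 (fst (lincomb c z r)) (snd (lincomb c z r)) \<longrightarrow>
        (\<forall>i<r. c i \<in> I2 f1 f2))"

definition H1_basis :: "'a::comm_ring_1 \<Rightarrow> 'a \<Rightarrow> (nat \<Rightarrow> 'a \<times> 'a) \<Rightarrow> nat \<Rightarrow> bool" where
  "H1_basis f1 f2 z r \<longleftrightarrow> H1_generates f1 f2 z r \<and> H1_indep f1 f2 z r"

definition H1_min_gens :: "'a::comm_ring_1 \<Rightarrow> 'a \<Rightarrow> (nat \<Rightarrow> 'a \<times> 'a) \<Rightarrow> nat \<Rightarrow> bool" where
  "H1_min_gens f1 f2 z r \<longleftrightarrow> H1_generates f1 f2 z r \<and>
     (\<forall>r'<r. \<forall>z'. \<not> H1_generates f1 f2 z' r')"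

(* Quasi-complete intersection for I = (f1,f2), unfolded for the 2-term Koszul complex:
   H_1(E) is S-free with basis [z_0],...,[z_{r-1}], and the canonical map
   \<And>^j_S H_1(E) -> H_j(E) is bijective for all j.  In degrees 0 and 1 it is the
   identity.  In degree 2, \<And>^2 H_1 is S-free on [z_i]\<and>[z_k] (i<k), mapped to the class
   of z_i \<and> z_k in H_2(E) = kz_H2.  For j \<ge> 3, H_j(E) = 0, and \<And>^j H_1 is the S-free
   module on j-subsets of {0..r-1}; bijectivity means that module is zero, i.e. every
   R-coefficient family on j-subsets has all coefficients in I. *)
definition qci2 :: "'a::comm_ring_1 \<Rightarrow> 'a \<Rightarrow> bool" where
  "qci2 f1 f2 \<longleftrightarrow> (\<exists>r z. H1_basis f1 f2 z r \<and>
     (\<forall>w\<in>kz_H2 f1 f2. \<exists>c. w = (\<Sum>i<r. \<Sum>k\<in>{i<..<r}. c i k * kz_wedge (z i) (z k))) \<and>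
     (\<forall>c. (\<Sum>i<r. \<Sum>k\<in>{i<..<r}. c i k * kz_wedge (z i) (z k)) = 0 \<longrightarrow>
          (\<forall>i k. i < k \<and> k < r \<longrightarrow> c i k \<in> I2 f1 f2)) \<and>
     (\<forall>j\<ge>3. \<forall>c :: nat set \<Rightarrow> 'a.
          (\<forall>J. c J \<noteq> 0 \<longrightarrow> J \<subseteq> {..<r} \<and> card J = j) \<longrightarrow> (\<forall>J. c J \<in> I2 f1 f2)))"

definition cond2 :: "'a::comm_ring_1 \<Rightarrow> 'a \<Rightarrow> bool" where
  "cond2 f1 f2 \<longleftrightarrow> (\<exists>w. H1_basis f1 f2 w 2) \<and>
     (\<exists>z. H1_min_gens f1 f2 z 2 \<and>
        (let \<Delta> = kz_wedge (z 0) (z 1) in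
           ann (I2 f1 f2) = {\<Delta> * r | r. True} \<and> ann {\<Delta>} = I2 f1 f2))"

(* Condition (3): exactness of R^4 -d3-> R^3 -d2-> R^2 -d1-> R -d0-> R -d1^T-> R^2
   (matrices acting on column vectors) *)
definition cond3 :: "'a::comm_ring_1 \<Rightarrow> 'a \<Rightarrow> bool" where
  "cond3 f1 f2 \<longleftrightarrow> (\<exists>a b c d. a \<in> max_ideal \<and> b \<in> max_ideal \<and> c \<in> max_ideal \<and> d \<in> max_ideal \<and>
     \<comment> \<open>exact at R^3: ker d2 = im d3\<close>
     (\<forall>y1 y2 y3. (- (f2 * y1) + a * y2 + b * y3 = 0 \<and> f1 * y1 + c * y2 + d * y3 = 0) \<longleftrightarrow>
        (\<exists>x1 x2 x3 x4. y1 = - (c * x1) - d * x2 + a * x3 + b * x4 \<and>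
                       y2 = f1 * x1 + f2 * x3 \<and> y3 = f1 * x2 + f2 * x4)) \<and>
     \<comment> \<open>exact at R^2: ker d1 = im d2\<close>
     (\<forall>u1 u2. f1 * u1 + f2 * u2 = 0 \<longleftrightarrow>
        (\<exists>y1 y2 y3. u1 = - (f2 * y1) + a * y2 + b * y3 \<and> u2 = f1 * y1 + c * y2 + d * y3)) \<and>
     \<comment> \<open>exact at the first R: ker d0 = im d1\<close>
     (\<forall>t. (a * d - b * c) * t = 0 \<longleftrightarrow> (\<exists>u1 u2. t = f1 * u1 + f2 * u2)) \<and>
     \<comment> \<open>exact at the second R: ker d1^T = im d0\<close>
     (\<forall>s. (f1 * s = 0 \<and> f2 * s = 0) \<longleftrightarrow> (\<exists>t. s = (a * d - b * c) * t)))"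

end

theory Submission
  imports Defs
begin


lemma I2_iff: "x \<in> I2 f1 f2 \<longleftrightarrow> (\<exists>a b. x = a*f1 + b*f2)"
  by (auto simp: I2_def)

lemma I2_add: "x \<in> I2 f1 f2 \<Longrightarrow> y \<in> I2 f1 f2 \<Longrightarrow> x + y \<in> I2 f1 f2"
proof -
  assume "x \<in> I2 f1 f2" "y \<in> I2 f1 f2"
  then obtain a b a' b' where "x = a*f1 + b*f2" "y = a'*f1 + b'*f2" by (auto simp: I2_iff)
  then have "x + y = (a+a')*f1 + (b+b')*f2" by (simp add: algebra_simps)
  then show ?thesis by (auto simp: I2_iff)
qed

lemma I2_mult: "x \<in> I2 f1 f2 \<Longrightarrow> r * x \<in> I2 f1 f2"
proof -
  assume "x \<in> I2 f1 f2"
  then obtain a b where "x = a*f1 + b*f2" by (auto simp: I2_iff)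
  then have "r * x = (r*a)*f1 + (r*b)*f2" by (simp add: algebra_simps)
  then show ?thesis by (auto simp: I2_iff)
qed

lemma I2_f1: "f1 \<in> I2 f1 f2" unfolding I2_iff by (rule exI[of _ 1], rule exI[of _ 0]) simp
lemma I2_f2: "f2 \<in> I2 f1 f2" unfolding I2_iff by (rule exI[of _ 0], rule exI[of _ 1]) simp

lemma I2_ideal: "is_ideal (I2 f1 f2)"
  unfolding is_ideal_def using I2_add I2_mult[of _ f1 f2] I2_mult[OF I2_f1, of 0] by auto

lemma one_notin:
  assumes nu2: "\<not> (\<exists>g. I2 f1 f2 = {r * g | r. True})"
  shows "(1::'a::comm_ring_1) \<notin> I2 f1 f2"
proof
  assume h: "1 \<in> I2 f1 f2"
  have "I2 f1 f2 = {r * 1 | r. True}"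
    using I2_mult[OF h] by auto
  then show False using nu2 by blast
qed

lemma I2_nonunit:
  assumes nu2: "\<not> (\<exists>g. I2 f1 f2 = {r * g | r. True})" and "x \<in> I2 f1 f2"
  shows "\<not> x dvd (1::'a::comm_ring_1)"
proof
  assume "x dvd 1"
  then obtain k where "1 = x * k" by (auto elim: dvdE)
  then have "1 = k * x" by (simp add: mult.commute)
  then show False using one_notin[OF nu2] I2_mult[OF assms(2), of k] by simp
qed

lemma unit_plus:
  assumes local: "local_ring TYPE('a)" and "u dvd 1" and "\<not> x dvd 1"
  shows "(u + x) dvd (1::'a::comm_ring_1)"
proof (rule ccontr)
  assume "\<not> ?thesis"
  moreover have "\<not> (- x) dvd 1" using assms(3) by simp
  ultimately have "\<not> (u + x + - x) dvd 1" using local unfolding local_ring_def by blast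
  then show False using assms(2) by simp
qed

lemma ideal_sum: assumes J: "is_ideal J" shows "finite G \<Longrightarrow> G \<subseteq> J \<Longrightarrow> (\<Sum>g\<in>G. c g * g) \<in> J"
proof (induction G rule: finite_induct)
  case empty then show ?case using J by (simp add: is_ideal_def)
next
  case (insert x F) then show ?case using J by (simp add: is_ideal_def)
qed

lemma ideal_gen_subset: "is_ideal J \<Longrightarrow> F \<subseteq> J \<Longrightarrow> ideal_gen F \<subseteq> J"
  unfolding ideal_gen_def using ideal_sum by blast

lemma ideal_gen_incl: "F \<subseteq> ideal_gen F"
proof
  fix f assume "f \<in> F"
  then show "f \<in> ideal_gen F" unfolding ideal_gen_def
    by (intro CollectI exI[of _ "{f}"] exI[of _ "\<lambda>_. 1"]) auto
qed

lemma noeth_max: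
  fixes \<F> :: "'a::comm_ring_1 set set"
  assumes noeth: "noetherian_ring TYPE('a)" and ne: "\<F> \<noteq> {}" and id: "\<forall>A\<in>\<F>. is_ideal A"
  shows "\<exists>M\<in>\<F>. \<forall>A\<in>\<F>. M \<subseteq> A \<longrightarrow> A = M"
proof (rule ccontr)
  assume "\<not> ?thesis"
  then have "\<forall>M\<in>\<F>. \<exists>A. A \<in> \<F> \<and> M \<subset> A" by blast
  from bchoice[OF this] obtain nxt where nxt: "\<forall>M\<in>\<F>. nxt M \<in> \<F> \<and> M \<subset> nxt M" by blast
  obtain A0 where A0: "A0 \<in> \<F>" using ne by blast
  define s where "s n = (nxt ^^ n) A0" for n
  have sF: "s n \<in> \<F>" for n by (induction n) (auto simp: s_def A0 nxt)
  have step: "s n \<subset> s (Suc n)" for n using nxt sF[of n] by (simp add: s_def)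
  have mono: "m \<le> n \<Longrightarrow> s m \<subseteq> s n" for m n
    using lift_Suc_mono_le[of s m n] step by auto
  define U where "U = \<Union>(range s)"
  have "is_ideal U"
    unfolding is_ideal_def
  proof (intro conjI ballI allI)
    show "0 \<in> U" using id sF[of 0] by (auto simp: U_def is_ideal_def)
  next
    fix x y assume "x \<in> U" "y \<in> U"
    then obtain m n where "x \<in> s m" "y \<in> s n" by (auto simp: U_def)
    then have "x \<in> s (max m n)" "y \<in> s (max m n)" using mono[of m "max m n"] mono[of n "max m n"] by auto
    then have "x + y \<in> s (max m n)" using id sF by (auto simp: is_ideal_def)
    then show "x + y \<in> U" by (auto simp: U_def)
  next
    fix r x assume "x \<in> U"
    then obtain m where "x \<in> s m" by (auto simp: U_def)
    then have "r * x \<in> s m" using id sF by (auto simp: is_ideal_def)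
    then show "r * x \<in> U" by (auto simp: U_def)
  qed
  then obtain F where F: "finite F" "U = ideal_gen F"
    using noeth unfolding noetherian_ring_def by blast
  have "\<forall>f\<in>F. \<exists>n. f \<in> s n" using ideal_gen_incl[of F] F by (auto simp: U_def)
  from bchoice[OF this] obtain nf where nf: "\<forall>f\<in>F. f \<in> s (nf f)" by blast
  define N where "N = (\<Sum>f\<in>F. nf f)"
  have "F \<subseteq> s N"
  proof
    fix f assume "f \<in> F"
    then have "nf f \<le> N" unfolding N_def using F(1) by (intro member_le_sum) auto
    then show "f \<in> s N" using mono nf \<open>f \<in> F\<close> by blast
  qed
  then have "ideal_gen F \<subseteq> s N" using id sF by (intro ideal_gen_subset) auto
  then have "U \<subseteq> s N" using F(2) by simp
  moreover have "s (Suc N) \<subseteq> U" by (auto simp: U_def)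
  ultimately show False using step[of N] by blast
qed



lemma aux1: "(P::'a::comm_ring_1)*(1 + -Q)*y = (P + f2 - (P*Q + f2))*y" by (simp add: algebra_simps)
lemma aux2: "1 = (u::'a::comm_ring_1) * v \<Longrightarrow> P * y = (P * u * y) * v"
proof -
  assume h: "1 = u * v"
  have "(P * u * y) * v = P * y * (u * v)" by (simp add: ac_simps)
  then show ?thesis using h by simp
qed
lemma aux3: "(f::'a::comm_ring_1)^Suc l * y = f^l * (f * y)" by (simp add: ac_simps)
lemma aux4: "(x::'a::comm_ring_1) * (P * g) = P * (g * x)" by (simp add: ac_simps)

lemma ann_ideal: "is_ideal {t. t*x = (0::'a::comm_ring_1)}"
  by (auto simp: is_ideal_def distrib_right mult.assoc)

lemma prime_pow:
  assumes pr: "\<forall>a b. a*b*x = 0 \<longrightarrow> a*x = 0 \<or> b*x = (0::'a::comm_ring_1)"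
  shows "f^Suc n * x = 0 \<Longrightarrow> f * x = 0"
proof (induction n)
  case 0 then show ?case by simp
next
  case (Suc n)
  then have "f * f^Suc n * x = 0" by simp
  then show ?case using pr Suc.IH by blast
qed

lemma prime_prod:
  fixes n :: nat
  assumes pr: "\<forall>a b. a*b*x = 0 \<longrightarrow> a*x = 0 \<or> b*x = (0::'a::comm_ring_1)" and x: "x \<noteq> 0"
  shows "(\<Prod>k<n. g k) * x = 0 \<Longrightarrow> \<exists>k<n. g k * x = 0"
proof (induction n)
  case 0 then show ?case using x by simp
next
  case (Suc n)
  then have "(\<Prod>k<n. g k) * g n * x = 0" by (simp add: mult.commute)
  then show ?case using pr Suc.IH less_Suc_eq by blast
qed

lemma ann_nonzero:
  fixes f1 f2 :: "'a::comm_ring_1"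
  assumes noeth: "noetherian_ring TYPE('a)"
    and local: "local_ring TYPE('a)"
    and nu2: "\<not> (\<exists>g. I2 f1 f2 = {r * g | r. True})"
    and grade0: "\<not> (\<exists>x\<in>I2 f1 f2. (\<forall>y. x * y = 0 \<longrightarrow> y = 0) \<and> \<not> x dvd 1)"
  shows "\<exists>x. x \<noteq> 0 \<and> x*f1 = 0 \<and> x*f2 = 0"
proof (rule ccontr)
  assume H: "\<not> ?thesis"
  define g where "g k = f1^Suc k + f2" for k
  have gI: "g k \<in> I2 f1 f2" for k
  proof -
    have h: "f1^k*f1 + f2 \<in> I2 f1 f2" by (rule I2_add[OF I2_mult[OF I2_f1] I2_f2])
    show ?thesis unfolding g_def power_Suc2 by (rule h)
  qed
  have zd: "\<exists>y. y \<noteq> 0 \<and> g k * y = 0" for k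
  proof -
    have "\<not> ((\<forall>y. g k * y = 0 \<longrightarrow> y = 0) \<and> \<not> g k dvd 1)" using grade0 gI[of k] by blast
    then show ?thesis using I2_nonunit[OF nu2 gI[of k]] by blast
  qed
  have "\<exists>x. x \<noteq> 0 \<and> g k * x = 0 \<and> (\<forall>a b. a*b*x = 0 \<longrightarrow> a*x = 0 \<or> b*x = 0)" for k
  proof -
    define \<F> where "\<F> = {{t. t*x = 0} | x. x \<noteq> 0 \<and> g k * x = 0}"
    obtain y where y: "y \<noteq> 0" "g k * y = 0" using zd[of k] by blast
    have "{t. t*y = 0} \<in> \<F>" unfolding \<F>_def using y by blast
    then have "\<F> \<noteq> {}" by blast
    moreover have "\<forall>A\<in>\<F>. is_ideal A"
      unfolding \<F>_def using ann_ideal by blast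
    ultimately obtain M where M: "M \<in> \<F>" "\<forall>A\<in>\<F>. M \<subseteq> A \<longrightarrow> A = M"
      using noeth_max[OF noeth] by blast
    from M(1) obtain x where x: "M = {t. t*x = 0}" "x \<noteq> 0" "g k * x = 0" unfolding \<F>_def by blast
    have "a*x = 0 \<or> b*x = 0" if ab: "a*b*x = 0" for a b
    proof (rule ccontr)
      assume nz: "\<not> (a*x = 0 \<or> b*x = 0)"
      have sub: "M \<subseteq> {t. t*(a*x) = 0}"
      proof
        fix t assume "t \<in> M"
        then have "t * x = 0" using x(1) by simp
        moreover have "t*(a*x) = a*(t*x)" by (rule mult.left_commute)
        ultimately show "t \<in> {t. t*(a*x) = 0}" by simp
      qed
      have "g k * (a*x) = a * (g k * x)" by (rule mult.left_commute)
      then have gax: "g k * (a*x) = 0" using x(3) by simp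
      have "a*x \<noteq> 0" using nz by blast
      then have "{t. t*(a*x) = 0} \<in> \<F>" unfolding \<F>_def using gax by blast
      then have "{t. t*(a*x) = 0} = M" using M(2) sub by blast
      moreover have "b * (a*x) = a*b*x" by (simp add: ac_simps)
      then have "b * (a*x) = 0" using ab by simp
      ultimately have "b \<in> M" by blast
      then show False using nz x(1) by simp
    qed
    then show ?thesis using x by blast
  qed
  then have "\<forall>k. \<exists>x. x \<noteq> 0 \<and> g k * x = 0 \<and> (\<forall>a b. a*b*x = 0 \<longrightarrow> a*x = 0 \<or> b*x = 0)" by blast
  from choice[OF this] obtain x where X: "\<forall>k. x k \<noteq> 0 \<and> g k * x k = 0 \<and> (\<forall>a b. a*b*x k = 0 \<longrightarrow> a*x k = 0 \<or> b*x k = 0)"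
    by blast
  have key: "False" if kl: "k < l" and P: "g k * y = 0" "g l * y = 0" and y: "y \<noteq> 0"
    and pr: "\<forall>a b. a*b*y = 0 \<longrightarrow> a*y = 0 \<or> b*y = 0" for k l y
  proof -
    have lk: "l - k = Suc (l-k-1)" using kl by simp
    have "f1^(l-k) = f1^(l-k-1) * f1" by (subst lk) (simp only: power_Suc2)
    then have fI: "f1^(l-k) \<in> I2 f1 f2" using I2_mult[OF I2_f1, of "f1^(l-k-1)" f1 f2] by simp
    have "- (f1^(l-k)) \<in> I2 f1 f2" using I2_mult[OF fI, of "-1"] by simp
    then have "\<not> (- (f1^(l-k))) dvd 1" using I2_nonunit[OF nu2] by blast
    then have "(1 + - (f1^(l-k))) dvd 1" by (rule unit_plus[OF local one_dvd])
    then obtain v where v: "1 = (1 + - (f1^(l-k))) * v" by (auto elim: dvdE)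
    have sl: "Suc l = Suc k + (l - k)" using kl by simp
    have pw: "f1^Suc l = f1^Suc k * f1^(l-k)"
    proof -
      have "f1^Suc l = f1^(Suc k + (l - k))" by (simp only: sl)
      also have "\<dots> = f1^Suc k * f1^(l-k)" by (rule power_add)
      finally show ?thesis .
    qed
    have "(g k - g l) * y = 0" using P by (simp add: left_diff_distrib)
    moreover have "f1^Suc k * (1 + - (f1^(l-k))) * y = (g k - g l) * y"
      unfolding g_def pw by (rule aux1)
    ultimately have A0: "f1^Suc k * (1 + - (f1^(l-k))) * y = 0" by simp
    have "f1^Suc k * y = (f1^Suc k * (1 + - (f1^(l-k))) * y) * v" using v by (rule aux2)
    then have "f1^Suc k * y = 0" using A0 by simp
    then have f1y: "f1 * y = 0" using prime_pow[OF pr] by blast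
    have "f1^Suc l * y = f1^l * (f1 * y)" by (rule aux3)
    then have "f1^Suc l * y = 0" using f1y by simp
    moreover have "g l * y = f1^Suc l * y + f2 * y" unfolding g_def by (rule distrib_right)
    ultimately have "f2 * y = 0" using P(2) by simp
    moreover have "y * f1 = 0" using f1y by (simp add: mult.commute)
    moreover have "y * f2 = 0" using calculation(1) by (simp add: mult.commute)
    ultimately show False using H y by blast
  qed
  have Xk: "x k \<noteq> 0" "g k * x k = 0" "\<forall>a b. a*b*x k = 0 \<longrightarrow> a*x k = 0 \<or> b*x k = 0" for k
    using X by blast+
  have distinct: "g k * x l \<noteq> 0" if "k \<noteq> l" for k l
  proof
    assume a: "g k * x l = 0"
    show False
    proof (cases "k < l")
      case True show False using key[OF True a Xk(2)[of l] Xk(1)[of l] Xk(3)[of l]] .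
    next
      case False then have "l < k" using that by simp
      show False using key[OF \<open>l < k\<close> Xk(2)[of l] a Xk(1)[of l] Xk(3)[of l]] .
    qed
  qed
  define A where "A n = {t. t * (\<Prod>k<n. g k) = 0}" for n
  have ne: "range A \<noteq> {}" by simp
  have idA: "is_ideal (A n)" for n unfolding A_def by (rule ann_ideal)
  have id: "\<forall>B\<in>range A. is_ideal B" using idA by simp
  obtain M where M: "M \<in> range A" "\<forall>B\<in>range A. M \<subseteq> B \<longrightarrow> B = M"
    using noeth_max[OF noeth ne id] by blast
  then obtain N where N: "M = A N" by blast
  have sub: "A N \<subseteq> A (Suc N)"
  proof
    fix t assume "t \<in> A N"
    then have "t * (\<Prod>k<N. g k) = 0" by (simp add: A_def)
    moreover have "t * (\<Prod>k<Suc N. g k) = (t * (\<Prod>k<N. g k)) * g N" by (simp add: mult.assoc)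
    ultimately show "t \<in> A (Suc N)" by (simp add: A_def)
  qed
  have "A (Suc N) \<in> range A" by (rule rangeI)
  with M(2) have "M \<subseteq> A (Suc N) \<longrightarrow> A (Suc N) = M" by (rule bspec)
  then have eq: "A (Suc N) = A N" using N sub by simp
  have pe: "(\<Prod>k<Suc N. g k) = (\<Prod>k<N. g k) * g N" by (rule prod.lessThan_Suc)
  have "x N * (\<Prod>k<Suc N. g k) = (\<Prod>k<N. g k) * (g N * x N)" unfolding pe by (rule aux4)
  also have "\<dots> = 0" using Xk(2)[of N] by simp
  finally have "x N \<in> A (Suc N)" by (simp add: A_def)
  then have "x N \<in> A N" using eq by simp
  then have "x N * (\<Prod>k<N. g k) = 0" by (simp add: A_def)
  then have "(\<Prod>k<N. g k) * x N = 0" by (simp add: mult.commute)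
  then obtain k where "k < N" "g k * x N = 0"
    using prime_prod[OF Xk(3)[of N] Xk(1)[of N]] by blast
  then show False using distinct[of k N] by simp
qed



lemma lincomb_2: "lincomb c z 2 = (c 0 * fst (z 0) + c 1 * fst (z 1), c 0 * snd (z 0) + c 1 * snd (z 1))"
  by (simp add: lincomb_def numeral_2_eq_2)
lemma lincomb_1: "lincomb c z (Suc 0) = (c 0 * fst (z 0), c 0 * snd (z 0))"
  by (simp add: lincomb_def)
lemma lincomb_0: "lincomb c z 0 = (0, 0)"
  by (simp add: lincomb_def)

lemma less2: "(i::nat) < 2 \<longleftrightarrow> i = 0 \<or> i = 1" by auto

lemma H1_gen2: "H1_generates f1 f2 z 2 \<longleftrightarrow> kz_cycle f1 f2 (z 0) \<and> kz_cycle f1 f2 (z 1) \<and>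
   (\<forall>p. kz_cycle f1 f2 p \<longrightarrow> (\<exists>c0 c1. kz_bdry f1 f2 (fst p - (c0*fst(z 0) + c1*fst(z 1))) (snd p - (c0*snd(z 0)+c1*snd(z 1)))))"
  (is "?L \<longleftrightarrow> ?R")
proof
  assume L: ?L
  have c: "kz_cycle f1 f2 (z 0)" "kz_cycle f1 f2 (z 1)" using L unfolding H1_generates_def by auto
  have "\<exists>c0 c1. kz_bdry f1 f2 (fst p - (c0*fst(z 0) + c1*fst(z 1))) (snd p - (c0*snd(z 0)+c1*snd(z 1)))"
    if cp: "kz_cycle f1 f2 p" for p
  proof -
    have "\<forall>p. kz_cycle f1 f2 p \<longrightarrow> (\<exists>c. kz_bdry f1 f2 (fst p - fst (lincomb c z 2)) (snd p - snd (lincomb c z 2)))"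
      using L unfolding H1_generates_def by (rule conjunct2)
    then obtain c where "kz_bdry f1 f2 (fst p - fst (lincomb c z 2)) (snd p - snd (lincomb c z 2))"
      using cp by blast
    then show ?thesis unfolding lincomb_2 by auto
  qed
  then show ?R using c by blast
next
  assume R: ?R
  show ?L unfolding H1_generates_def
  proof (intro conjI allI impI)
    fix i :: nat assume "i < 2" then show "kz_cycle f1 f2 (z i)" using R by (auto simp: less2)
  next
    fix p assume "kz_cycle f1 f2 p"
    then obtain c0 c1 where "kz_bdry f1 f2 (fst p - (c0*fst(z 0) + c1*fst(z 1))) (snd p - (c0*snd(z 0)+c1*snd(z 1)))"
      using R by blast
    then show "\<exists>c. kz_bdry f1 f2 (fst p - fst (lincomb c z 2)) (snd p - snd (lincomb c z 2))"
      unfolding lincomb_2 apply (rule_tac x="\<lambda>i::nat. if i = 0 then c0 else c1" in exI) by simp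
  qed
qed

lemma H1_indep2: "H1_indep f1 f2 z 2 \<longleftrightarrow>
   (\<forall>c0 c1. kz_bdry f1 f2 (c0*fst(z 0) + c1*fst(z 1)) (c0*snd(z 0)+c1*snd(z 1)) \<longrightarrow> c0 \<in> I2 f1 f2 \<and> c1 \<in> I2 f1 f2)"
  (is "?L \<longleftrightarrow> ?R")
proof
  assume L: ?L
  show ?R
  proof (intro allI impI)
    fix c0 c1 assume "kz_bdry f1 f2 (c0*fst(z 0) + c1*fst(z 1)) (c0*snd(z 0)+c1*snd(z 1))"
    then have "kz_bdry f1 f2 (fst (lincomb (\<lambda>i::nat. if i = 0 then c0 else c1) z 2)) (snd (lincomb (\<lambda>i::nat. if i = 0 then c0 else c1) z 2))"
      unfolding lincomb_2 by simp
    then have h: "\<forall>i<2. (\<lambda>i::nat. if i = 0 then c0 else c1) i \<in> I2 f1 f2"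
      using L unfolding H1_indep_def by blast
    show "c0 \<in> I2 f1 f2 \<and> c1 \<in> I2 f1 f2" using h[rule_format, of 0] h[rule_format, of 1] by simp
  qed
next
  assume ?R then show ?L unfolding H1_indep_def lincomb_2 by (auto simp: less2)
qed

lemma I2_lin: "x \<in> I2 f1 f2 \<Longrightarrow> y \<in> I2 f1 f2 \<Longrightarrow> a*x + b*y \<in> I2 f1 f2"
  using I2_add I2_mult by blast

lemma bd_iff: "kz_bdry f1 f2 x y \<longleftrightarrow> (\<exists>r. x = - (r * f2) \<and> y = r * f1)"
  by (simp add: kz_bdry_def)

lemma ann_I2: "ann (I2 f1 f2) = {s. s*f1 = 0 \<and> s*f2 = 0}"
proof (intro set_eqI iffI)
  fix s assume "s \<in> ann (I2 f1 f2)"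
  then have h: "\<forall>y\<in>I2 f1 f2. s*y = 0" by (simp add: ann_def)
  show "s \<in> {s. s*f1 = 0 \<and> s*f2 = 0}" using bspec[OF h I2_f1] bspec[OF h I2_f2] by simp
next
  fix s assume "s \<in> {s. s*f1 = 0 \<and> s*f2 = 0}"
  then have h: "s*f1 = 0" "s*f2 = 0" by auto
  have "s * (x*f1 + y*f2) = x*(s*f1) + y*(s*f2)" for x y by (simp add: algebra_simps)
  then show "s \<in> ann (I2 f1 f2)" using h by (auto simp: ann_def I2_def)
qed



lemma comb1: "X - Y = k1*(L1 - R1) \<Longrightarrow> L1 = R1 \<Longrightarrow> X = (Y::'a::comm_ring_1)" by simp
lemma comb2: "X - Y = k1*(L1 - R1) + k2*(L2 - R2) \<Longrightarrow> L1 = R1 \<Longrightarrow> L2 = R2 \<Longrightarrow> X = (Y::'a::comm_ring_1)" by simp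
lemma comb3: "X - Y = k1*(L1 - R1) + k2*(L2 - R2) + k3*(L3 - R3) \<Longrightarrow> L1 = R1 \<Longrightarrow> L2 = R2 \<Longrightarrow> L3 = R3 \<Longrightarrow> X = (Y::'a::comm_ring_1)" by simp

lemma core_indep:
  fixes f1 f2 :: "'a::comm_ring_1"
  assumes local: "local_ring TYPE('a)" and nu2: "\<not> (\<exists>g. I2 f1 f2 = {r * g | r. True})"
  and indw: "\<forall>c0 c1. (\<exists>r. c0*p0 + c1*p1 = -(r*f2) \<and> c0*q0 + c1*q1 = r*f1) \<longrightarrow> c0 \<in> I2 f1 f2 \<and> c1 \<in> I2 f1 f2"
  and w0: "p0 - (n00*a0 + n01*a1) = -(r0*f2)" "q0 - (n00*b0 + n01*b1) = r0*f1"
  and w1: "p1 - (n10*a0 + n11*a1) = -(r1*f2)" "q1 - (n10*b0 + n11*b1) = r1*f1"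
  and z0: "a0 - (m00*p0 + m01*p1) = -(s0*f2)" "b0 - (m00*q0 + m01*q1) = s0*f1"
  and z1: "a1 - (m10*p0 + m11*p1) = -(s1*f2)" "b1 - (m10*q0 + m11*q1) = s1*f1"
  and bd: "c0*a0 + c1*a1 = -(r*f2)" "c0*b0 + c1*b1 = r*f1"
  shows "c0 \<in> I2 f1 f2 \<and> c1 \<in> I2 f1 f2"
proof -
  let ?I = "I2 f1 f2"
  have e0: "n00*m00 + n01*m10 - 1 \<in> ?I \<and> n00*m01 + n01*m11 \<in> ?I"
  proof -
    have "(n00*m00 + n01*m10 - 1)*p0 + (n00*m01 + n01*m11)*p1 = -((-(r0 + n00*s0 + n01*s1))*f2)"
      by (rule comb3[OF _ w0(1) z0(1) z1(1), of _ _ "-1" "-n00" "-n01"]) (simp add: algebra_simps)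
    moreover have "(n00*m00 + n01*m10 - 1)*q0 + (n00*m01 + n01*m11)*q1 = (-(r0 + n00*s0 + n01*s1))*f1"
      by (rule comb3[OF _ w0(2) z0(2) z1(2), of _ _ "-1" "-n00" "-n01"]) (simp add: algebra_simps)
    ultimately show ?thesis using indw by blast
  qed
  have e1: "n10*m00 + n11*m10 \<in> ?I \<and> n10*m01 + n11*m11 - 1 \<in> ?I"
  proof -
    have "(n10*m00 + n11*m10)*p0 + (n10*m01 + n11*m11 - 1)*p1 = -((-(r1 + n10*s0 + n11*s1))*f2)"
      by (rule comb3[OF _ w1(1) z0(1) z1(1), of _ _ "-1" "-n10" "-n11"]) (simp add: algebra_simps)
    moreover have "(n10*m00 + n11*m10)*q0 + (n10*m01 + n11*m11 - 1)*q1 = (-(r1 + n10*s0 + n11*s1))*f1"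
      by (rule comb3[OF _ w1(2) z0(2) z1(2), of _ _ "-1" "-n10" "-n11"]) (simp add: algebra_simps)
    ultimately show ?thesis using indw by blast
  qed
  define e00 where "e00 = n00*m00 + n01*m10 - 1"
  define e01 where "e01 = n00*m01 + n01*m11"
  define e10 where "e10 = n10*m00 + n11*m10"
  define e11 where "e11 = n10*m01 + n11*m11 - 1"
  have "(n00*n11 - n01*n10) * (m00*m11 - m01*m10) = 1 + (e00 + e11 + e00*e11 - e01*e10)"
    unfolding e00_def e01_def e10_def e11_def by (simp add: algebra_simps)
  moreover have "e00 + e11 + e00*e11 - e01*e10 \<in> ?I"
  proof -
    have "e00 + e11 + e00*e11 - e01*e10 = 1*e00 + (1 + e00)*e11 + (-e01)*e10" by (simp add: algebra_simps)
    moreover have "1*e00 + (1 + e00)*e11 \<in> ?I" using e0 e1 I2_lin unfolding e00_def e11_def by blast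
    moreover have "(-e01)*e10 \<in> ?I" using e1 I2_mult unfolding e10_def by blast
    ultimately show ?thesis using I2_add by metis
  qed
  ultimately have "(n00*n11 - n01*n10) * (m00*m11 - m01*m10) dvd 1"
    using unit_plus[OF local one_dvd I2_nonunit[OF nu2]] by simp
  then have "(m00*m11 - m01*m10) dvd 1" using dvd_mult_right by blast
  then obtain v where v: "1 = (m00*m11 - m01*m10) * v" by (auto elim: dvdE)
  have "(c0*m00 + c1*m10)*p0 + (c0*m01 + c1*m11)*p1 = -((r - c0*s0 - c1*s1)*f2)"
    by (rule comb3[OF _ bd(1) z0(1) z1(1), of _ _ 1 "-c0" "-c1"]) (simp add: algebra_simps)
  moreover have "(c0*m00 + c1*m10)*q0 + (c0*m01 + c1*m11)*q1 = (r - c0*s0 - c1*s1)*f1"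
    by (rule comb3[OF _ bd(2) z0(2) z1(2), of _ _ 1 "-c0" "-c1"]) (simp add: algebra_simps)
  ultimately have g: "c0*m00 + c1*m10 \<in> ?I" "c0*m01 + c1*m11 \<in> ?I" using indw by blast+
  have "c0 = (v*m11)*(c0*m00 + c1*m10) + (-(v*m10))*(c0*m01 + c1*m11)"
    by (rule comb1[OF _ v, of _ _ c0]) (simp add: algebra_simps)
  moreover have "c1 = (v*m00)*(c0*m01 + c1*m11) + (-(v*m01))*(c0*m00 + c1*m10)"
    by (rule comb1[OF _ v, of _ _ c1]) (simp add: algebra_simps)
  ultimately show ?thesis using g I2_lin by metis
qed

lemma core_small:
  fixes f1 f2 :: "'a::comm_ring_1"
  assumes nu2: "\<not> (\<exists>g. I2 f1 f2 = {r * g | r. True})"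
  and indw: "\<forall>c0 c1. (\<exists>r. c0*p0 + c1*p1 = -(r*f2) \<and> c0*q0 + c1*q1 = r*f1) \<longrightarrow> c0 \<in> I2 f1 f2 \<and> c1 \<in> I2 f1 f2"
  and w0: "p0 - n0*a = -(r0*f2)" "q0 - n0*b = r0*f1"
  and w1: "p1 - n1*a = -(r1*f2)" "q1 - n1*b = r1*f1"
  and z: "a - (m0*p0 + m1*p1) = -(s*f2)" "b - (m0*q0 + m1*q1) = s*f1"
  shows False
proof -
  let ?I = "I2 f1 f2"
  have "(n0*m0 - 1)*p0 + (n0*m1)*p1 = -((-(r0 + n0*s))*f2)"
    by (rule comb2[OF _ w0(1) z(1), of _ _ "-1" "-n0"]) (simp add: algebra_simps)
  moreover have "(n0*m0 - 1)*q0 + (n0*m1)*q1 = (-(r0 + n0*s))*f1"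
    by (rule comb2[OF _ w0(2) z(2), of _ _ "-1" "-n0"]) (simp add: algebra_simps)
  ultimately have e0: "n0*m0 - 1 \<in> ?I" "n0*m1 \<in> ?I" using indw by blast+
  have "(n1*m0)*p0 + (n1*m1 - 1)*p1 = -((-(r1 + n1*s))*f2)"
    by (rule comb2[OF _ w1(1) z(1), of _ _ "-1" "-n1"]) (simp add: algebra_simps)
  moreover have "(n1*m0)*q0 + (n1*m1 - 1)*q1 = (-(r1 + n1*s))*f1"
    by (rule comb2[OF _ w1(2) z(2), of _ _ "-1" "-n1"]) (simp add: algebra_simps)
  ultimately have e1: "n1*m0 \<in> ?I" "n1*m1 - 1 \<in> ?I" using indw by blast+
  have eq: "1 = (n1*m0)*(n0*m1) + ((-1)*(n0*m0 - 1) + (-(n0*m0))*(n1*m1 - 1))" by (simp add: algebra_simps)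
  have "(n1*m0)*(n0*m1) \<in> ?I" using e0 I2_mult by blast
  moreover have "(-1)*(n0*m0 - 1) + (-(n0*m0))*(n1*m1 - 1) \<in> ?I" using e0 e1 I2_lin by blast
  ultimately have "1 \<in> ?I" using I2_add eq by metis
  then show False using one_notin[OF nu2] by blast
qed



lemma indep_bd:
  assumes "H1_indep f1 f2 w 2"
  shows "\<forall>c0 c1. (\<exists>r. c0*fst (w 0) + c1*fst (w 1) = -(r*f2) \<and> c0*snd (w 0) + c1*snd (w 1) = r*f1) \<longrightarrow> c0 \<in> I2 f1 f2 \<and> c1 \<in> I2 f1 f2"
  using assms unfolding H1_indep2 bd_iff by blast

lemma gens_basis:
  fixes f1 f2 :: "'a::comm_ring_1"
  assumes local: "local_ring TYPE('a)" and nu2: "\<not> (\<exists>g. I2 f1 f2 = {r * g | r. True})"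
  and bw: "H1_basis f1 f2 w 2" and gz: "H1_generates f1 f2 z 2"
  shows "H1_basis f1 f2 z 2"
proof -
  have gw: "H1_generates f1 f2 w 2" and iw: "H1_indep f1 f2 w 2" using bw by (auto simp: H1_basis_def)
  note G = gw[unfolded H1_gen2 bd_iff] and Z = gz[unfolded H1_gen2 bd_iff]
  obtain n00 n01 r0 where w0: "fst (w 0) - (n00*fst (z 0) + n01*fst (z 1)) = -(r0*f2)" "snd (w 0) - (n00*snd (z 0) + n01*snd (z 1)) = r0*f1"
    using G Z by blast
  obtain n10 n11 r1 where w1: "fst (w 1) - (n10*fst (z 0) + n11*fst (z 1)) = -(r1*f2)" "snd (w 1) - (n10*snd (z 0) + n11*snd (z 1)) = r1*f1"
    using G Z by blast
  obtain m00 m01 s0 where z0: "fst (z 0) - (m00*fst (w 0) + m01*fst (w 1)) = -(s0*f2)" "snd (z 0) - (m00*snd (w 0) + m01*snd (w 1)) = s0*f1"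
    using G Z by blast
  obtain m10 m11 s1 where z1: "fst (z 1) - (m10*fst (w 0) + m11*fst (w 1)) = -(s1*f2)" "snd (z 1) - (m10*snd (w 0) + m11*snd (w 1)) = s1*f1"
    using G Z by blast
  have "H1_indep f1 f2 z 2"
    unfolding H1_indep2 bd_iff
  proof (intro allI impI)
    fix c0 c1 assume "\<exists>r. c0 * fst (z 0) + c1 * fst (z 1) = - (r * f2) \<and> c0 * snd (z 0) + c1 * snd (z 1) = r * f1"
    then obtain r where bd: "c0 * fst (z 0) + c1 * fst (z 1) = - (r * f2)" "c0 * snd (z 0) + c1 * snd (z 1) = r * f1" by blast
    show "c0 \<in> I2 f1 f2 \<and> c1 \<in> I2 f1 f2"
      by (rule core_indep[OF local nu2 indep_bd[OF iw] w0 w1 z0 z1 bd])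
  qed
  then show ?thesis using gz by (simp add: H1_basis_def)
qed

lemma no_small:
  fixes f1 f2 :: "'a::comm_ring_1"
  assumes nu2: "\<not> (\<exists>g. I2 f1 f2 = {r * g | r. True})"
  and bw: "H1_basis f1 f2 w 2" and r: "r' < 2"
  shows "\<not> H1_generates f1 f2 z r'"
proof
  assume gz: "H1_generates f1 f2 z r'"
  have gw: "H1_generates f1 f2 w 2" and iw: "H1_indep f1 f2 w 2" using bw by (auto simp: H1_basis_def)
  have cy: "kz_cycle f1 f2 (w 0)" "kz_cycle f1 f2 (w 1)" using gw by (auto simp: H1_gen2)
  note I = indep_bd[OF iw]
  consider "r' = 0" | "r' = Suc 0" using r by linarith
  then show False
  proof cases
    case 1
    have "\<forall>p. kz_cycle f1 f2 p \<longrightarrow> (\<exists>c. kz_bdry f1 f2 (fst p - fst (lincomb c z 0)) (snd p - snd (lincomb c z 0)))"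
      using gz 1 unfolding H1_generates_def by simp
    then have "\<exists>c. kz_bdry f1 f2 (fst (w 0) - fst (lincomb c z 0)) (snd (w 0) - snd (lincomb c z 0))"
      using cy(1) by blast
    then have "kz_bdry f1 f2 (fst (w 0)) (snd (w 0))" by (simp add: lincomb_0)
    then have "1 \<in> I2 f1 f2" using I[rule_format, of 1 0] by (auto simp: bd_iff)
    then show False using one_notin[OF nu2] by blast
  next
    case 2
    have Z0: "\<forall>p. kz_cycle f1 f2 p \<longrightarrow> (\<exists>c. kz_bdry f1 f2 (fst p - fst (lincomb c z (Suc 0))) (snd p - snd (lincomb c z (Suc 0))))"
      using gz unfolding H1_generates_def 2 by (rule conjunct2)
    have Z: "\<exists>n r. fst p - n*fst (z 0) = -(r*f2) \<and> snd p - n*snd (z 0) = r*f1" if cp: "kz_cycle f1 f2 p" for p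
    proof -
      obtain c where "kz_bdry f1 f2 (fst p - fst (lincomb c z (Suc 0))) (snd p - snd (lincomb c z (Suc 0)))"
        using Z0 cp by blast
      then show ?thesis unfolding lincomb_1 bd_iff by auto
    qed
    have zc: "kz_cycle f1 f2 (z 0)" using gz unfolding H1_generates_def 2 by simp
    obtain n0 r0 where w0: "fst (w 0) - n0*fst (z 0) = -(r0*f2)" "snd (w 0) - n0*snd (z 0) = r0*f1"
      using Z[OF cy(1)] by blast
    obtain n1 r1 where w1: "fst (w 1) - n1*fst (z 0) = -(r1*f2)" "snd (w 1) - n1*snd (z 0) = r1*f1"
      using Z[OF cy(2)] by blast
    obtain m0 m1 s where z: "fst (z 0) - (m0*fst (w 0) + m1*fst (w 1)) = -(s*f2)" "snd (z 0) - (m0*snd (w 0) + m1*snd (w 1)) = s*f1"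
      using gw[unfolded H1_gen2 bd_iff] zc by blast
    show False by (rule core_small[OF nu2 I w0 w1 z])
  qed
qed

lemma basis_min:
  assumes nu2: "\<not> (\<exists>g. I2 f1 f2 = {r * g | r. True})" and bw: "H1_basis f1 f2 w 2"
  shows "H1_min_gens f1 f2 w 2"
  using bw no_small[OF nu2 bw] by (auto simp: H1_min_gens_def H1_basis_def)

lemma cycle_nonunit:
  fixes f1 f2 :: "'a::comm_ring_1"
  assumes nu2: "\<not> (\<exists>g. I2 f1 f2 = {r * g | r. True})" and cy: "a*f1 + c*f2 = 0"
  shows "\<not> a dvd 1 \<and> \<not> c dvd 1"
proof (intro conjI notI)
  assume "a dvd 1"
  then obtain v where v: "1 = a*v" by (auto elim: dvdE)
  have f1: "f1 = (-(v*c))*f2" by (rule comb2[OF _ v cy, of _ _ f1 v]) (simp add: algebra_simps)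
  have "I2 f1 f2 = {r * f2 | r. True}"
  proof (intro set_eqI iffI)
    fix x assume "x \<in> I2 f1 f2"
    then obtain s t where "x = s*f1 + t*f2" by (auto simp: I2_iff)
    then have "x = (t - s*v*c)*f2" using f1 by (simp add: algebra_simps)
    then show "x \<in> {r * f2 | r. True}" by blast
  next
    fix x assume "x \<in> {r * f2 | r. True}"
    then show "x \<in> I2 f1 f2" using I2_mult[OF I2_f2] by blast
  qed
  then show False using nu2 by blast
next
  assume "c dvd 1"
  then obtain v where v: "1 = c*v" by (auto elim: dvdE)
  have f2: "f2 = (-(v*a))*f1" by (rule comb2[OF _ v cy, of _ _ f2 v]) (simp add: algebra_simps)
  have "I2 f1 f2 = {r * f1 | r. True}"
  proof (intro set_eqI iffI)
    fix x assume "x \<in> I2 f1 f2"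
    then obtain s t where "x = s*f1 + t*f2" by (auto simp: I2_iff)
    then have "x = (s - t*v*a)*f1" using f2 by (simp add: algebra_simps)
    then show "x \<in> {r * f1 | r. True}" by blast
  next
    fix x assume "x \<in> {r * f1 | r. True}"
    then show "x \<in> I2 f1 f2" using I2_mult[OF I2_f1] by blast
  qed
  then show False using nu2 by blast
qed



lemma to_cond3:
  fixes f1 f2 :: "'a::comm_ring_1"
  assumes cy: "a*f1 + c*f2 = 0" "b*f1 + d*f2 = 0"
  and annI: "\<forall>s. (s*f1 = 0 \<and> s*f2 = 0) \<longleftrightarrow> (\<exists>t. s = (a*d - b*c)*t)"
  and annD: "\<forall>t. t*(a*d-b*c) = 0 \<longleftrightarrow> t \<in> I2 f1 f2"
  and gen: "\<forall>u1 u2. f1*u1 + f2*u2 = 0 \<longrightarrow> (\<exists>c0 c1 r. u1 - (c0*a + c1*b) = -(r*f2) \<and> u2 - (c0*c + c1*d) = r*f1)"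
  and ind: "\<forall>c0 c1. (\<exists>r. c0*a + c1*b = -(r*f2) \<and> c0*c + c1*d = r*f1) \<longrightarrow> c0 \<in> I2 f1 f2 \<and> c1 \<in> I2 f1 f2"
  and nu: "\<not> a dvd 1" "\<not> b dvd 1" "\<not> c dvd 1" "\<not> d dvd 1"
  shows "cond3 f1 f2"
  unfolding cond3_def
proof (rule exI[of _ a], rule exI[of _ b], rule exI[of _ c], rule exI[of _ d], intro conjI allI iffI)
  show "a \<in> max_ideal" "b \<in> max_ideal" "c \<in> max_ideal" "d \<in> max_ideal" using nu by (auto simp: max_ideal_def)
next
  fix y1 y2 y3
  assume "- (f2 * y1) + a * y2 + b * y3 = 0 \<and> f1 * y1 + c * y2 + d * y3 = 0"
  then have e1: "- (f2 * y1) + a * y2 + b * y3 = 0" and e2: "f1 * y1 + c * y2 + d * y3 = 0" by auto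
  have "y2*a + y3*b = -((-y1)*f2)" by (rule comb1[OF _ e1, of _ _ 1]) (simp add: algebra_simps)
  moreover have "y2*c + y3*d = (-y1)*f1" by (rule comb1[OF _ e2, of _ _ 1]) (simp add: algebra_simps)
  ultimately have "y2 \<in> I2 f1 f2" "y3 \<in> I2 f1 f2" using ind by blast+
  then obtain x1 x3 x2 x4 where y2: "y2 = x1*f1 + x3*f2" and y3: "y3 = x2*f1 + x4*f2" by (auto simp: I2_iff)
  have e1': "- (f2 * y1) + a * (x1*f1 + x3*f2) + b * (x2*f1 + x4*f2) = 0" using e1 y2 y3 by simp
  have e2': "f1 * y1 + c * (x1*f1 + x3*f2) + d * (x2*f1 + x4*f2) = 0" using e2 y2 y3 by simp
  define y1' where "y1' = - (c * x1) - d * x2 + a * x3 + b * x4"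
  have "(y1 - y1')*f1 = 0" unfolding y1'_def
    by (rule comb3[OF _ e2' cy, of _ _ 1 "-x3" "-x4"]) (simp add: algebra_simps)
  moreover have "(y1 - y1')*f2 = 0" unfolding y1'_def
    by (rule comb3[OF _ e1' cy, of _ _ "-1" x1 x2]) (simp add: algebra_simps)
  ultimately obtain t where t: "y1 - y1' = (a*d - b*c)*t" using annI by blast
  have t': "y1 - (- (c * x1) - d * x2 + a * x3 + b * x4) = (a*d - b*c)*t" using t by (simp only: y1'_def)
  have g1: "y1 = - (c * (x1 + b*t)) - d * x2 + a * (x3 + d*t) + b * x4"
    by (rule comb1[OF _ t', of _ _ 1]) (simp add: algebra_simps)
  have g2: "y2 = f1 * (x1 + b*t) + f2 * (x3 + d*t)"
    by (rule comb2[OF _ y2 cy(2), of _ _ 1 "-t"]) (simp add: algebra_simps)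
  have g3: "y3 = f1 * x2 + f2 * x4"
    by (rule comb1[OF _ y3, of _ _ 1]) (simp add: algebra_simps)
  show "\<exists>x1 x2 x3 x4. y1 = - (c * x1) - d * x2 + a * x3 + b * x4 \<and> y2 = f1 * x1 + f2 * x3 \<and> y3 = f1 * x2 + f2 * x4"
    using g1 g2 g3 by blast
next
  fix y1 y2 y3
  assume "\<exists>x1 x2 x3 x4. y1 = - (c * x1) - d * x2 + a * x3 + b * x4 \<and> y2 = f1 * x1 + f2 * x3 \<and> y3 = f1 * x2 + f2 * x4"
  then obtain x1 x2 x3 x4 where h1: "y1 = - (c * x1) - d * x2 + a * x3 + b * x4" and h2: "y2 = f1 * x1 + f2 * x3"
     and h3: "y3 = f1 * x2 + f2 * x4" by blast
  have "- (f2 * y1) + a * y2 + b * y3 = 0" unfolding h1 h2 h3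
    by (rule comb2[OF _ cy, of _ _ x1 x2]) (simp add: algebra_simps)
  moreover have "f1 * y1 + c * y2 + d * y3 = 0" unfolding h1 h2 h3
    by (rule comb2[OF _ cy, of _ _ x3 x4]) (simp add: algebra_simps)
  ultimately show "- (f2 * y1) + a * y2 + b * y3 = 0" "f1 * y1 + c * y2 + d * y3 = 0" by blast+
next
  fix u1 u2 assume "f1 * u1 + f2 * u2 = 0"
  then obtain c0 c1 r where h1: "u1 - (c0*a + c1*b) = -(r*f2)" and h2: "u2 - (c0*c + c1*d) = r*f1" using gen by blast
  have "u1 = - (f2 * r) + a * c0 + b * c1" by (rule comb1[OF _ h1, of _ _ 1]) (simp add: algebra_simps)
  moreover have "u2 = f1 * r + c * c0 + d * c1" by (rule comb1[OF _ h2, of _ _ 1]) (simp add: algebra_simps)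
  ultimately show "\<exists>y1 y2 y3. u1 = - (f2 * y1) + a * y2 + b * y3 \<and> u2 = f1 * y1 + c * y2 + d * y3"
    by blast
next
  fix u1 u2 assume "\<exists>y1 y2 y3. u1 = - (f2 * y1) + a * y2 + b * y3 \<and> u2 = f1 * y1 + c * y2 + d * y3"
  then obtain y1 y2 y3 where h1: "u1 = - (f2 * y1) + a * y2 + b * y3" and h2: "u2 = f1 * y1 + c * y2 + d * y3" by blast
  show "f1 * u1 + f2 * u2 = 0" unfolding h1 h2
    by (rule comb2[OF _ cy, of _ _ y2 y3]) (simp add: algebra_simps)
next
  fix t assume "(a * d - b * c) * t = 0"
  then have "t \<in> I2 f1 f2" using annD by (simp add: mult.commute)
  then show "\<exists>u1 u2. t = f1 * u1 + f2 * u2" by (auto simp: I2_iff mult.commute)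
next
  fix t assume "\<exists>u1 u2. t = f1 * u1 + f2 * u2"
  then have "t \<in> I2 f1 f2" by (auto simp: I2_iff mult.commute)
  then show "(a * d - b * c) * t = 0" using annD by (simp add: mult.commute)
next
  fix s assume "f1 * s = 0 \<and> f2 * s = 0"
  then have "s * f1 = 0 \<and> s * f2 = 0" by (simp add: mult.commute)
  then show "\<exists>t. s = (a * d - b * c) * t" using annI by blast
next
  fix s assume "\<exists>t. s = (a * d - b * c) * t"
  then have "s*f1 = 0 \<and> s*f2 = 0" using annI by blast
  then show "f1 * s = 0" "f2 * s = 0" by (simp_all add: mult.commute)
qed



lemma sum2: "(\<Sum>i<(2::nat). \<Sum>k\<in>{i<..<2}. F i k) = (F 0 1 :: 'a::comm_ring_1)"
proof -
  have a: "{..<2::nat} = {0,1}" by auto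
  have b: "{0::nat<..<2} = {1}" by auto
  have c: "{1::nat<..<2} = {}" by auto
  have d: "{Suc 0<..<2} = {}" by auto
  have e: "{0::nat<..<2} = {Suc 0}" by auto
  show ?thesis unfolding a by (simp add: b c d e)
qed

lemma sum_small: "r \<le> 1 \<Longrightarrow> (\<Sum>i<(r::nat). \<Sum>k\<in>{i<..<r}. F i k) = (0 :: 'a::comm_ring_1)"
proof -
  assume r: "r \<le> 1"
  have "\<forall>i\<in>{..<r}. {i<..<r} = {}" using r by auto
  then show ?thesis by (intro sum.neutral) simp
qed

lemma wedge_ann:
  assumes cp: "kz_cycle f1 f2 p" and cq: "kz_cycle f1 f2 q"
  shows "kz_wedge p q * f1 = 0 \<and> kz_wedge p q * f2 = (0::'a::comm_ring_1)"
proof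
  have hp: "fst p * f1 + snd p * f2 = 0" and hq: "fst q * f1 + snd q * f2 = 0"
    using cp cq by (auto simp: kz_cycle_def)
  show "kz_wedge p q * f1 = 0" unfolding kz_wedge_def
    by (rule comb2[OF _ hp hq, of _ _ "snd q" "- snd p"]) (simp add: algebra_simps)
  show "kz_wedge p q * f2 = 0" unfolding kz_wedge_def
    by (rule comb2[OF _ hp hq, of _ _ "- fst q" "fst p"]) (simp add: algebra_simps)
qed

lemma I2_kill: "t \<in> I2 f1 f2 \<Longrightarrow> D * f1 = 0 \<Longrightarrow> D * f2 = 0 \<Longrightarrow> t * D = (0::'a::comm_ring_1)"
proof -
  assume t: "t \<in> I2 f1 f2" and h: "D * f1 = 0" "D * f2 = 0"
  then obtain u v where tu: "t = u*f1 + v*f2" by (auto simp: I2_iff)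
  have "t * D = u*(D*f1) + v*(D*f2)" unfolding tu by (simp add: algebra_simps)
  then show ?thesis using h by simp
qed

lemma qci_to_cond2:
  fixes f1 f2 :: "'a::comm_ring_1"
  assumes noeth: "noetherian_ring TYPE('a)"
    and local: "local_ring TYPE('a)"
    and nu2: "\<not> (\<exists>g. I2 f1 f2 = {r * g | r. True})"
    and grade0: "\<not> (\<exists>x\<in>I2 f1 f2. (\<forall>y. x * y = 0 \<longrightarrow> y = 0) \<and> \<not> x dvd 1)"
    and q: "qci2 f1 f2"
  shows "cond2 f1 f2"
proof -
  obtain r z where B: "H1_basis f1 f2 z r"
    and S: "\<forall>w\<in>kz_H2 f1 f2. \<exists>c. w = (\<Sum>i<r. \<Sum>k\<in>{i<..<r}. c i k * kz_wedge (z i) (z k))"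
    and Inj: "\<forall>c. (\<Sum>i<r. \<Sum>k\<in>{i<..<r}. c i k * kz_wedge (z i) (z k)) = 0 \<longrightarrow>
          (\<forall>i k. i < k \<and> k < r \<longrightarrow> c i k \<in> I2 f1 f2)"
    and J3: "\<forall>j\<ge>3. \<forall>c :: nat set \<Rightarrow> 'a.
          (\<forall>J. c J \<noteq> 0 \<longrightarrow> J \<subseteq> {..<r} \<and> card J = j) \<longrightarrow> (\<forall>J. c J \<in> I2 f1 f2)"
    using q unfolding qci2_def by blast
  have r3: "\<not> r \<ge> 3"
  proof
    assume r: "r \<ge> 3"
    define c where "c J = (if J = {0,1,2::nat} then 1 else (0::'a))" for J
    have "\<forall>J. c J \<noteq> 0 \<longrightarrow> J \<subseteq> {..<r} \<and> card J = 3"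
      using r by (auto simp: c_def split: if_splits)
    then have "\<forall>J. c J \<in> I2 f1 f2" using J3 by auto
    then have "c {0,1,2} \<in> I2 f1 f2" by blast
    then show False using one_notin[OF nu2] by (simp add: c_def)
  qed
  have r1: "\<not> r \<le> 1"
  proof
    assume r: "r \<le> 1"
    obtain x where x: "x \<noteq> 0" "x*f1 = 0" "x*f2 = 0" using ann_nonzero[OF noeth local nu2 grade0] by blast
    then have "x \<in> kz_H2 f1 f2" by (simp add: kz_H2_def)
    then obtain c where "x = (\<Sum>i<r. \<Sum>k\<in>{i<..<r}. c i k * kz_wedge (z i) (z k))" using S by blast
    then have "x = 0" using sum_small[OF r] by simp
    then show False using x by simp
  qed
  have r2: "r = 2" using r1 r3 by simp
  have zb: "H1_basis f1 f2 z 2" using B r2 by simp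
  have cz: "kz_cycle f1 f2 (z 0)" "kz_cycle f1 f2 (z 1)" using zb by (auto simp: H1_basis_def H1_gen2)
  define \<Delta> where "\<Delta> = kz_wedge (z 0) (z 1)"
  have Dk: "\<Delta> * f1 = 0" "\<Delta> * f2 = 0" using wedge_ann[OF cz] by (auto simp: \<Delta>_def)
  have e1: "ann (I2 f1 f2) = {\<Delta> * r | r. True}"
  proof (intro set_eqI iffI)
    fix s assume "s \<in> ann (I2 f1 f2)"
    then have "s \<in> kz_H2 f1 f2" by (simp add: ann_I2 kz_H2_def)
    then obtain c where "s = (\<Sum>i<r. \<Sum>k\<in>{i<..<r}. c i k * kz_wedge (z i) (z k))" using S by blast
    then have "s = c 0 1 * \<Delta>" using r2 sum2 by (simp add: \<Delta>_def)
    then show "s \<in> {\<Delta> * r | r. True}" by (auto simp: mult.commute)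
  next
    fix s assume "s \<in> {\<Delta> * r | r. True}"
    then obtain t where t: "s = \<Delta> * t" by blast
    have "s * f1 = t * (\<Delta> * f1)" "s * f2 = t * (\<Delta> * f2)" unfolding t by (simp_all add: ac_simps)
    then show "s \<in> ann (I2 f1 f2)" using Dk by (simp add: ann_I2)
  qed
  have e2: "ann {\<Delta>} = I2 f1 f2"
  proof (intro set_eqI iffI)
    fix t assume "t \<in> ann {\<Delta>}"
    then have t0: "t * \<Delta> = 0" by (simp add: ann_def)
    define c0 where "c0 = (\<lambda>(i::nat) (k::nat). t)"
    have "(\<Sum>i<2::nat. \<Sum>k\<in>{i<..<2}. c0 i k * kz_wedge (z i) (z k)) = c0 0 1 * kz_wedge (z 0) (z 1)"
      by (rule sum2)
    then have "(\<Sum>i<r. \<Sum>k\<in>{i<..<r}. c0 i k * kz_wedge (z i) (z k)) = 0" using t0 r2 by (simp add: c0_def \<Delta>_def)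
    then have "\<forall>i k. i < k \<and> k < r \<longrightarrow> c0 i k \<in> I2 f1 f2" using Inj by blast
    then have "c0 0 1 \<in> I2 f1 f2" using r2 by simp
    then show "t \<in> I2 f1 f2" by (simp add: c0_def)
  next
    fix t assume "t \<in> I2 f1 f2"
    then show "t \<in> ann {\<Delta>}" using I2_kill Dk by (simp add: ann_def)
  qed
  show ?thesis unfolding cond2_def Let_def
    using zb basis_min[OF nu2 zb] e1 e2 unfolding \<Delta>_def by blast
qed

lemma cond2_to_qci:
  fixes f1 f2 :: "'a::comm_ring_1"
  assumes local: "local_ring TYPE('a)"
    and nu2: "\<not> (\<exists>g. I2 f1 f2 = {r * g | r. True})"
    and c2: "cond2 f1 f2"
  shows "qci2 f1 f2"
proof -
  obtain w z where wb: "H1_basis f1 f2 w 2" and zm: "H1_min_gens f1 f2 z 2"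
    and e1: "ann (I2 f1 f2) = {kz_wedge (z 0) (z 1) * r | r. True}"
    and e2: "ann {kz_wedge (z 0) (z 1)} = I2 f1 f2"
    using c2 unfolding cond2_def Let_def by blast
  have zb: "H1_basis f1 f2 z 2" using gens_basis[OF local nu2 wb] zm by (simp add: H1_min_gens_def)
  define \<Delta> where "\<Delta> = kz_wedge (z 0) (z 1)"
  have S: "\<forall>w\<in>kz_H2 f1 f2. \<exists>c. w = (\<Sum>i<2::nat. \<Sum>k\<in>{i<..<2}. c i k * kz_wedge (z i) (z k))"
  proof
    fix x assume "x \<in> kz_H2 f1 f2"
    then have "x \<in> ann (I2 f1 f2)" by (simp add: ann_I2 kz_H2_def)
    then obtain t where t: "x = \<Delta> * t" using e1 by (auto simp: \<Delta>_def)
    define c0 where "c0 = (\<lambda>(i::nat) (k::nat). t)"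
    have "(\<Sum>i<2::nat. \<Sum>k\<in>{i<..<2}. c0 i k * kz_wedge (z i) (z k)) = c0 0 1 * kz_wedge (z 0) (z 1)"
      by (rule sum2)
    then have "x = (\<Sum>i<2::nat. \<Sum>k\<in>{i<..<2}. c0 i k * kz_wedge (z i) (z k))"
      using t by (simp add: c0_def \<Delta>_def mult.commute)
    then show "\<exists>c. x = (\<Sum>i<2::nat. \<Sum>k\<in>{i<..<2}. c i k * kz_wedge (z i) (z k))" by blast
  qed
  have Inj: "\<forall>c. (\<Sum>i<2::nat. \<Sum>k\<in>{i<..<2}. c i k * kz_wedge (z i) (z k)) = 0 \<longrightarrow>
          (\<forall>i k. i < k \<and> k < 2 \<longrightarrow> c i k \<in> I2 f1 f2)"
  proof (intro allI impI)
    fix c :: "nat \<Rightarrow> nat \<Rightarrow> 'a" and i k :: nat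
    assume h: "(\<Sum>i<2::nat. \<Sum>k\<in>{i<..<2}. c i k * kz_wedge (z i) (z k)) = 0" and ik: "i < k \<and> k < 2"
    have "c 0 1 * \<Delta> = 0" using h by (simp only: sum2) (simp add: \<Delta>_def)
    then have "c 0 1 \<in> I2 f1 f2" using e2 by (auto simp: ann_def \<Delta>_def)
    moreover have "i = 0" "k = 1" using ik by auto
    ultimately show "c i k \<in> I2 f1 f2" by simp
  qed
  have J3: "\<forall>j\<ge>3. \<forall>c :: nat set \<Rightarrow> 'a.
          (\<forall>J. c J \<noteq> 0 \<longrightarrow> J \<subseteq> {..<2} \<and> card J = j) \<longrightarrow> (\<forall>J. c J \<in> I2 f1 f2)"
  proof (intro allI impI)
    fix j :: nat and c :: "nat set \<Rightarrow> 'a" and J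
    assume j: "j \<ge> 3" and h: "\<forall>J. c J \<noteq> 0 \<longrightarrow> J \<subseteq> {..<2} \<and> card J = j"
    have "c J = 0"
    proof (rule ccontr)
      assume "c J \<noteq> 0"
      then have "J \<subseteq> {..<2}" "card J = j" using h by auto
      then have "card J \<le> 2" using card_mono[of "{..<2::nat}" J] by simp
      then show False using j \<open>card J = j\<close> by simp
    qed
    then show "c J \<in> I2 f1 f2" using I2_mult[OF I2_f1, of 0] by simp
  qed
  show ?thesis unfolding qci2_def using zb S Inj J3 by blast
qed



lemma cond2_to_cond3:
  fixes f1 f2 :: "'a::comm_ring_1"
  assumes local: "local_ring TYPE('a)"
    and nu2: "\<not> (\<exists>g. I2 f1 f2 = {r * g | r. True})"
    and c2: "cond2 f1 f2"
  shows "cond3 f1 f2"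
proof -
  obtain w z where wb: "H1_basis f1 f2 w 2" and zm: "H1_min_gens f1 f2 z 2"
    and e1: "ann (I2 f1 f2) = {kz_wedge (z 0) (z 1) * r | r. True}"
    and e2: "ann {kz_wedge (z 0) (z 1)} = I2 f1 f2"
    using c2 unfolding cond2_def Let_def by blast
  have zb: "H1_basis f1 f2 z 2" using gens_basis[OF local nu2 wb] zm by (simp add: H1_min_gens_def)
  have gz: "H1_generates f1 f2 z 2" and iz: "H1_indep f1 f2 z 2" using zb by (auto simp: H1_basis_def)
  define a where "a = fst (z 0)"
  define c where "c = snd (z 0)"
  define b where "b = fst (z 1)"
  define d where "d = snd (z 1)"
  have Dd: "kz_wedge (z 0) (z 1) = a*d - b*c" by (simp add: kz_wedge_def a_def b_def c_def d_def mult.commute)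
  have cz: "kz_cycle f1 f2 (z 0)" "kz_cycle f1 f2 (z 1)" using gz by (auto simp: H1_gen2)
  have cy: "a*f1 + c*f2 = 0" "b*f1 + d*f2 = 0" using cz by (auto simp: kz_cycle_def a_def b_def c_def d_def)
  show ?thesis
  proof (rule to_cond3[OF cy])
    show "\<forall>s. (s*f1 = 0 \<and> s*f2 = 0) \<longleftrightarrow> (\<exists>t. s = (a*d - b*c)*t)"
    proof
      fix s
      have "(s*f1 = 0 \<and> s*f2 = 0) \<longleftrightarrow> s \<in> ann (I2 f1 f2)" by (simp add: ann_I2)
      also have "\<dots> \<longleftrightarrow> (\<exists>t. s = (a*d - b*c)*t)" unfolding e1 Dd by blast
      finally show "(s*f1 = 0 \<and> s*f2 = 0) \<longleftrightarrow> (\<exists>t. s = (a*d - b*c)*t)" .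
    qed
  next
    show "\<forall>t. t*(a*d-b*c) = 0 \<longleftrightarrow> t \<in> I2 f1 f2"
      using e2 unfolding Dd by (auto simp: ann_def)
  next
    show "\<forall>u1 u2. f1*u1 + f2*u2 = 0 \<longrightarrow> (\<exists>c0 c1 r. u1 - (c0*a + c1*b) = -(r*f2) \<and> u2 - (c0*c + c1*d) = r*f1)"
    proof (intro allI impI)
      fix u1 u2 assume "f1*u1 + f2*u2 = 0"
      then have "kz_cycle f1 f2 (u1, u2)" by (simp add: kz_cycle_def mult.commute)
      then obtain c0 c1 where "kz_bdry f1 f2 (fst (u1,u2) - (c0*fst(z 0) + c1*fst(z 1))) (snd (u1,u2) - (c0*snd(z 0)+c1*snd(z 1)))"
        using gz unfolding H1_gen2 by blast
      then show "\<exists>c0 c1 r. u1 - (c0*a + c1*b) = -(r*f2) \<and> u2 - (c0*c + c1*d) = r*f1"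
        by (auto simp: bd_iff a_def b_def c_def d_def)
    qed
  next
    show "\<forall>c0 c1. (\<exists>r. c0*a + c1*b = -(r*f2) \<and> c0*c + c1*d = r*f1) \<longrightarrow> c0 \<in> I2 f1 f2 \<and> c1 \<in> I2 f1 f2"
      using indep_bd[OF iz] by (simp add: a_def b_def c_def d_def)
  next
    show "\<not> a dvd 1" "\<not> c dvd 1" using cycle_nonunit[OF nu2 cy(1)] by auto
    show "\<not> b dvd 1" "\<not> d dvd 1" using cycle_nonunit[OF nu2 cy(2)] by auto
  qed
qed

lemma cond3_to_cond2:
  fixes f1 f2 :: "'a::comm_ring_1"
  assumes local: "local_ring TYPE('a)"
    and nu2: "\<not> (\<exists>g. I2 f1 f2 = {r * g | r. True})"
    and c3: "cond3 f1 f2"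
  shows "cond2 f1 f2"
proof -
  obtain a b c d where
     X3: "\<forall>y1 y2 y3. (- (f2 * y1) + a * y2 + b * y3 = 0 \<and> f1 * y1 + c * y2 + d * y3 = 0) \<longleftrightarrow>
        (\<exists>x1 x2 x3 x4. y1 = - (c * x1) - d * x2 + a * x3 + b * x4 \<and>
                       y2 = f1 * x1 + f2 * x3 \<and> y3 = f1 * x2 + f2 * x4)"
     and X2: "\<forall>u1 u2. f1 * u1 + f2 * u2 = 0 \<longleftrightarrow>
        (\<exists>y1 y2 y3. u1 = - (f2 * y1) + a * y2 + b * y3 \<and> u2 = f1 * y1 + c * y2 + d * y3)"
     and X1: "\<forall>t. (a * d - b * c) * t = 0 \<longleftrightarrow> (\<exists>u1 u2. t = f1 * u1 + f2 * u2)"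
     and X0: "\<forall>s. (f1 * s = 0 \<and> f2 * s = 0) \<longleftrightarrow> (\<exists>t. s = (a * d - b * c) * t)"
    using c3 unfolding cond3_def by blast
  define z where "z = (\<lambda>i::nat. if i = 0 then (a, c) else (b, d))"
  have z0: "z 0 = (a, c)" and z1: "z 1 = (b, d)" by (simp_all add: z_def)
  have "f1 * a + f2 * c = 0"
    using X2[rule_format, of a c] by (metis add.commute add_0 mult_zero_right mult_1_right neg_equal_0_iff_equal mult_zero_left add.right_neutral)
  then have cya: "kz_cycle f1 f2 (z 0)" by (simp add: z0 kz_cycle_def mult.commute)
  have "f1 * b + f2 * d = 0"
    using X2[rule_format, of b d] by (metis add.commute add_0 mult_zero_right mult_1_right neg_equal_0_iff_equal mult_zero_left add.right_neutral)
  then have cyb: "kz_cycle f1 f2 (z 1)" unfolding kz_cycle_def z1 fst_conv snd_conv by (simp add: mult.commute)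
  have gz: "H1_generates f1 f2 z 2"
    unfolding H1_gen2
  proof (intro conjI allI impI cya cyb)
    fix p assume "kz_cycle f1 f2 p"
    then have "f1 * fst p + f2 * snd p = 0" by (simp add: kz_cycle_def mult.commute)
    then obtain y1 y2 y3 where h: "fst p = - (f2 * y1) + a * y2 + b * y3" "snd p = f1 * y1 + c * y2 + d * y3"
      using X2 by blast
    have "fst p - (y2*fst(z 0) + y3*fst(z 1)) = -(y1*f2)" unfolding h z0 z1 by (simp add: algebra_simps)
    moreover have "snd p - (y2*snd(z 0) + y3*snd(z 1)) = y1*f1" unfolding h z0 z1 by (simp add: algebra_simps)
    ultimately show "\<exists>c0 c1. kz_bdry f1 f2 (fst p - (c0*fst(z 0) + c1*fst(z 1))) (snd p - (c0*snd(z 0)+c1*snd(z 1)))"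
      unfolding bd_iff by blast
  qed
  have iz: "H1_indep f1 f2 z 2"
    unfolding H1_indep2 bd_iff z0 z1 fst_conv snd_conv
  proof (intro allI impI)
    fix c0 c1 assume "\<exists>r. c0 * a + c1 * b = - (r * f2) \<and> c0 * c + c1 * d = r * f1"
    then obtain r where h: "c0 * a + c1 * b = - (r * f2)" "c0 * c + c1 * d = r * f1" by blast
    have "- (f2 * (-r)) + a * c0 + b * c1 = 0"
      by (rule comb1[OF _ h(1), of _ _ 1]) (simp add: algebra_simps)
    moreover have "f1 * (-r) + c * c0 + d * c1 = 0"
      by (rule comb1[OF _ h(2), of _ _ 1]) (simp add: algebra_simps)
    ultimately obtain x1 x2 x3 x4 where "c0 = f1 * x1 + f2 * x3" "c1 = f1 * x2 + f2 * x4"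
      using X3 by blast
    then have "c0 = x1 * f1 + x3 * f2" "c1 = x2 * f1 + x4 * f2" by (simp_all add: mult.commute)
    then show "c0 \<in> I2 f1 f2 \<and> c1 \<in> I2 f1 f2" unfolding I2_iff by blast
  qed
  have zb: "H1_basis f1 f2 z 2" using gz iz by (simp add: H1_basis_def)
  have Dd: "kz_wedge (z 0) (z 1) = a*d - b*c" unfolding kz_wedge_def z0 z1 fst_conv snd_conv by (simp add: mult.commute)
  have e1: "ann (I2 f1 f2) = {kz_wedge (z 0) (z 1) * r | r. True}"
  proof (intro set_eqI)
    fix s
    have "s \<in> ann (I2 f1 f2) \<longleftrightarrow> (f1 * s = 0 \<and> f2 * s = 0)" by (simp add: ann_I2 mult.commute)
    also have "\<dots> \<longleftrightarrow> (\<exists>t. s = (a * d - b * c) * t)" using X0 by blast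
    also have "\<dots> \<longleftrightarrow> s \<in> {kz_wedge (z 0) (z 1) * r | r. True}" unfolding Dd by blast
    finally show "s \<in> ann (I2 f1 f2) \<longleftrightarrow> s \<in> {kz_wedge (z 0) (z 1) * r | r. True}" .
  qed
  have e2: "ann {kz_wedge (z 0) (z 1)} = I2 f1 f2"
  proof (intro set_eqI)
    fix t
    have "t \<in> ann {kz_wedge (z 0) (z 1)} \<longleftrightarrow> (a * d - b * c) * t = 0" unfolding ann_def Dd by (simp add: mult.commute)
    also have "\<dots> \<longleftrightarrow> (\<exists>u1 u2. t = f1 * u1 + f2 * u2)" using X1 by blast
    also have "\<dots> \<longleftrightarrow> t \<in> I2 f1 f2" by (auto simp: I2_iff mult.commute)
    finally show "t \<in> ann {kz_wedge (z 0) (z 1)} \<longleftrightarrow> t \<in> I2 f1 f2" .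
  qed
  show ?thesis unfolding cond2_def Let_def
    using zb basis_min[OF nu2 zb] e1 e2 by blast
qed

theorem lemma1p7:
  fixes f1 f2 :: "'a::comm_ring_1"
  assumes noeth: "noetherian_ring TYPE('a)"
    and local: "local_ring TYPE('a)"
    and nu2: "\<not> (\<exists>g. I2 f1 f2 = {r * g | r. True})"
    and grade0: "\<not> (\<exists>x\<in>I2 f1 f2. (\<forall>y. x * y = 0 \<longrightarrow> y = 0) \<and> \<not> x dvd 1)"
  shows "(qci2 f1 f2 \<longleftrightarrow> cond2 f1 f2) \<and> (cond2 f1 f2 \<longleftrightarrow> cond3 f1 f2)"
  using qci_to_cond2[OF noeth local nu2 grade0] cond2_to_qci[OF local nu2]
    cond2_to_cond3[OF local nu2] cond3_to_cond2[OF local nu2] by blast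


end
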